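(* Let $L\ge 2$ and let $S=(d,N_1,\dots,N_{L-1},1)$ be a neural network architecture. Let $\varrho:\mathbb{R}\to\mathbb{R}$ satisfy: (i) $\varrho$ is continuous and increasing; (ii) there is $x_0\in\mathbb{R}$ such that $\varrho$ is differentiable at $x_0$ with $\varrho'(x_0)\ne 0$; (iii) there is $r>0$ such that $\varrho|_{(-\infty,-r)\cup(r,\infty)}$ is differentiable; (iv) at least one of: (a) there are $\lambda,\lambda'\ge 0$ with $\lambda\ne\lambda'$ such that $\varrho'(x)\to\lambda$ as $x\to\infty$ and $\varrho'(x)\to\lambda'$ as $x\to-\infty$, and $N_{L-1}\ge 2$; or (b) $\varrho$ is bounded. Let $B>0$ and let $\mu$ be a finite Borel measure on $[-B,B]^d$ whose support $\operatorname{supp}\mu$ is uncountable. Then $\mathcal{RNN}_\varrho^{[-B,B]^d}(S)$ is not closed in $L^p(\mu)$ for any $p\in(0,\infty)$. More precisely, there is $f\in L^\infty(\mu)$ such that, for every $p\in(0,\infty)$, $f$ belongs to the closure of $\mathcal{RNN}_\varrho^{[-B,B]^d}(S)$ in $L^p(\mu)$ but $f\notin\mathcal{RNN}_\varrho^{[-B,B]^d}(S)$.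
   Context: A neural network with architecture $S=(N_0,\dots,N_L)$ ($N_0=d$) is a family $\Phi=((A_\ell,b_\ell))_{\ell=1}^L$, $A_\ell\in\mathbb{R}^{N_\ell\times N_{\ell-1}}$, $b_\ell\in\mathbb{R}^{N_\ell}$; $\mathcal{NN}(S)$ is the set of these. For $\varrho:\mathbb{R}\to\mathbb{R}$ and $\Omega\subset\mathbb{R}^d$, $\mathrm{R}_\varrho^\Omega(\Phi):\Omega\to\mathbb{R}^{N_L}$, $x\mapsto x_L$, where $x_0=x$, $x_\ell=\varrho(A_\ell x_{\ell-1}+b_\ell)$ for $1\le\ell\le L-1$ (componentwise), $x_L=A_Lx_{L-1}+b_L$; $\mathcal{RNN}_\varrho^\Omega(S)=\{\mathrm{R}_\varrho^\Omega(\Phi):\Phi\in\mathcal{NN}(S)\}$, regarded as a subset of $L^p(\mu)$ (functions identified $\mu$-a.e.). *)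

theory Defs
  imports "HOL-Analysis.Analysis"
begin

definition aff :: "nat \<Rightarrow> (nat \<Rightarrow> nat \<Rightarrow> real) \<Rightarrow> (nat \<Rightarrow> real) \<Rightarrow> (nat \<Rightarrow> real) \<Rightarrow> (nat \<Rightarrow> real)" where
  "aff n_in A b y = (\<lambda>i. (\<Sum>j<n_in. A i j * y j) + b i)"

text \<open>Evaluation of layers 2..L. The list of widths is [N_1,...,N_{L-1}]; the layer list
  has length L-1; the last layer is affine with scalar output (component 0, N_L = 1).\<close>
fun hidden_eval :: "(real \<Rightarrow> real) \<Rightarrow> nat list \<Rightarrow> ((nat \<Rightarrow> nat \<Rightarrow> real) \<times> (nat \<Rightarrow> real)) list
     \<Rightarrow> (nat \<Rightarrow> real) \<Rightarrow> real" where
  "hidden_eval \<rho> [n] [(A, b)] y = aff n A b y 0"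
| "hidden_eval \<rho> (n # m # ns) ((A, b) # \<Phi>) y = hidden_eval \<rho> (m # ns) \<Phi> (\<lambda>i. \<rho> (aff n A b y i))"
| "hidden_eval \<rho> _ _ y = 0"

text \<open>Realization of a network with architecture (d, N_1, ..., N_{L-1}, 1), d = CARD('d).
  First layer (A1, b1) maps R^d to R^{N_1}.\<close>
definition realization :: "(real \<Rightarrow> real) \<Rightarrow> nat list \<Rightarrow> (nat \<Rightarrow> 'd::finite \<Rightarrow> real) \<Rightarrow> (nat \<Rightarrow> real)
     \<Rightarrow> ((nat \<Rightarrow> nat \<Rightarrow> real) \<times> (nat \<Rightarrow> real)) list \<Rightarrow> real^'d \<Rightarrow> real" where
  "realization \<rho> Ns A1 b1 \<Phi> x =
     hidden_eval \<rho> Ns \<Phi> (\<lambda>i. \<rho> ((\<Sum>j\<in>UNIV. A1 i j * x $ j) + b1 i))"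

definition RNN :: "(real \<Rightarrow> real) \<Rightarrow> nat list \<Rightarrow> (real^'d::finite \<Rightarrow> real) set" where
  "RNN \<rho> Ns = {realization \<rho> Ns A1 b1 \<Phi> | A1 b1 \<Phi>. length \<Phi> = length Ns}"

definition cube :: "real \<Rightarrow> (real^'d::finite) set" where
  "cube B = {x. \<forall>j. \<bar>x $ j\<bar> \<le> B}"

definition measure_support :: "('a::metric_space) measure \<Rightarrow> 'a set" where
  "measure_support \<mu> = {x. \<forall>e>0. emeasure \<mu> (ball x e) > 0}"

end

theory Submission
  imports Defs
begin


lemma hidden_eval_cont:
  fixes Y :: "'a::topological_space \<Rightarrow> nat \<Rightarrow> real"
  assumes cont: "continuous_on UNIV \<rho>" and Y: "\<And>i. continuous_on UNIV (\<lambda>x. Y x i)"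
  shows "continuous_on UNIV (\<lambda>x. hidden_eval \<rho> ns \<Phi> (Y x))"
  using Y
proof (induction \<Phi> arbitrary: ns Y)
  case Nil
  then show ?case by (cases ns) auto
next
  case (Cons ab \<Phi>)
  obtain A b where ab: "ab = (A, b)" by fastforce
  show ?case
  proof (cases ns)
    case Nil then show ?thesis by (simp add: ab)
  next
    case (Cons n ms)
    show ?thesis
    proof (cases ms)
      case Nil
      show ?thesis
      proof (cases \<Phi>)
        case Nil
        have "continuous_on UNIV (\<lambda>x. (\<Sum>j<n. A 0 j * Y x j) + b 0)"
          by (intro continuous_on_add continuous_on_sum continuous_on_mult continuous_on_const Cons.prems)
        then show ?thesis using Nil \<open>ns = n # ms\<close> \<open>ms = []\<close> ab by (simp add: aff_def)
      next
        case (Cons z zs)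
        then show ?thesis using \<open>ns = n # ms\<close> \<open>ms = []\<close> ab by simp
      qed
    next
      case (Cons m ms')
      have "continuous_on UNIV (\<lambda>x. \<rho> (aff n A b (Y x) i))" for i
        unfolding aff_def
        by (rule continuous_on_compose2[OF cont]) (auto intro!: continuous_intros Cons.prems)
      then have "continuous_on UNIV (\<lambda>x. hidden_eval \<rho> (m # ms') \<Phi> (\<lambda>i. \<rho> (aff n A b (Y x) i)))"
        by (rule Cons.IH)
      then show ?thesis using \<open>ns = n # ms\<close> Cons ab by simp
    qed
  qed
qed

lemma realization_cont:
  assumes cont: "continuous_on UNIV \<rho>"
  shows "continuous_on UNIV (realization \<rho> Ns A1 b1 \<Phi>)"
  unfolding realization_def
proof (rule hidden_eval_cont[OF cont])
  fix i
  show "continuous_on UNIV (\<lambda>x::real^'a. \<rho> ((\<Sum>j\<in>UNIV. A1 i j * x $ j) + b1 i))"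
    by (rule continuous_on_compose2[OF cont]) (auto intro!: continuous_intros)
qed

definition Tf :: "(real\<Rightarrow>real) \<Rightarrow> nat \<Rightarrow> real \<Rightarrow> (nat\<Rightarrow>real) \<Rightarrow> (nat\<Rightarrow>real) \<Rightarrow> (nat\<Rightarrow>real) \<Rightarrow> real \<Rightarrow> real"
  where "Tf \<rho> K c0 c \<alpha> \<beta> s = c0 + (\<Sum>k<K. c k * \<rho> (\<alpha> k * s + \<beta> k))"

lemma sum_if_lt: "K \<le> (m::nat) \<Longrightarrow> (\<Sum>i<m. (if i < K then g i else 0)) = (\<Sum>i<K. g i)"
proof (induction m rule: dec_induct)
  case base
  then show ?case by (intro sum.cong) auto
next
  case (step n)
  then show ?case by simp
qed

lemma sum_delta_mult: "i0 < (n::nat) \<Longrightarrow> (\<Sum>j<n. (if j = i0 then a else 0) * (y j::real)) = a * y i0"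
proof -
  assume "i0 < n"
  have "(\<Sum>j<n. (if j = i0 then a else 0) * y j) = (\<Sum>j<n. if j = i0 then a * y j else 0)"
    by (rule sum.cong) auto
  also have "\<dots> = a * y i0" using \<open>i0 < n\<close> by (subst sum.delta) simp_all
  finally show ?thesis .
qed

lemma sum_if_lt_mult: "K \<le> (m::nat) \<Longrightarrow> (\<Sum>i<m. (if i < K then c i else 0) * (g i::real)) = (\<Sum>i<K. c i * g i)"
proof -
  assume "K \<le> m"
  have "(\<Sum>i<m. (if i < K then c i else 0) * g i) = (\<Sum>i<m. if i < K then c i * g i else 0)"
    by (rule sum.cong) auto
  also have "\<dots> = (\<Sum>i<K. c i * g i)" using \<open>K \<le> m\<close> by (rule sum_if_lt)
  finally show ?thesis .
qed

lemma base2: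
  assumes "K \<le> m" "i0 < n"
  shows "hidden_eval \<rho> [n, m] [(\<lambda>i j. if j = i0 then \<alpha> i else 0, \<beta>), (\<lambda>i j. if j < K then c j else 0, \<lambda>_. c0)] y
     = Tf \<rho> K c0 c \<alpha> \<beta> (y i0)"
  using assms by (simp add: aff_def Tf_def sum_delta_mult sum_if_lt_mult)



lemma approx_step:
  fixes \<rho> :: "real \<Rightarrow> real"
  assumes cont: "continuous_on UNIV \<rho>" and der: "(\<rho> has_real_derivative D) (at x0)"
    and D: "D \<noteq> 0" and R: "0 \<le> R" and eps: "0 < \<epsilon>"
  shows "\<exists>h>0. \<forall>s. \<bar>s\<bar> \<le> R \<longrightarrow>
     \<bar>Tf \<rho> K c0 c (\<lambda>k. \<alpha> k / (h * D)) (\<lambda>k. \<beta> k - \<alpha> k * \<rho> x0 / (h * D)) (\<rho> (x0 + h * s))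
       - Tf \<rho> K c0 c \<alpha> \<beta> s\<bar> \<le> \<epsilon>"
proof -
  define M where "M = (\<Sum>k<K. \<bar>\<alpha> k\<bar> * (R + 1) + \<bar>\<beta> k\<bar>)"
  define Cc where "Cc = (\<Sum>k<K. \<bar>c k\<bar>) + 1"
  define A where "A = (\<Sum>k<K. \<bar>\<alpha> k\<bar>)"
  have Cc: "Cc > 0" "(\<Sum>k<K. \<bar>c k\<bar>) \<le> Cc" unfolding Cc_def by (auto intro: sum_nonneg add_nonneg_pos)
  have A0: "A \<ge> 0" unfolding A_def by (auto intro: sum_nonneg)
  have "uniformly_continuous_on {-M..M} \<rho>"
    by (rule compact_uniformly_continuous) (auto intro: continuous_on_subset[OF cont])
  moreover have "\<epsilon> / Cc > 0" using eps Cc by auto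
  ultimately obtain \<delta> where \<delta>0: "\<delta> > 0" and \<delta>:
    "\<And>u v. u \<in> {-M..M} \<Longrightarrow> v \<in> {-M..M} \<Longrightarrow> dist v u < \<delta> \<Longrightarrow> dist (\<rho> v) (\<rho> u) < \<epsilon> / Cc"
    unfolding uniformly_continuous_on_def by metis
  define \<eta> where "\<eta> = min 1 (\<delta> / (A + 1)) / 2"
  have \<eta>0: "\<eta> > 0" and \<eta>1: "\<eta> \<le> 1" using \<delta>0 A0 by (auto simp: \<eta>_def)
  have "\<eta> \<le> \<delta> / (A + 1) / 2" unfolding \<eta>_def by (intro divide_right_mono) auto
  then have "A * \<eta> \<le> A * (\<delta> / (A + 1) / 2)" using A0 by (intro mult_left_mono) auto
  also have "\<dots> = (\<delta> / 2) * (A / (A + 1))" by (simp add: field_simps)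
  also have "\<dots> \<le> (\<delta> / 2) * 1" using A0 \<delta>0 by (intro mult_left_mono) auto
  also have "\<dots> < \<delta>" using \<delta>0 by simp
  finally have A\<eta>: "A * \<eta> < \<delta>" .
  define r where "r = \<eta> * \<bar>D\<bar> / (R + 1)"
  have r0: "r > 0" using \<eta>0 D R by (auto simp: r_def)
  from der have "(\<lambda>h. (\<rho> (x0 + h) - \<rho> x0) / h) \<midarrow>0\<rightarrow> D" by (simp add: DERIV_def)
  then obtain d where d0: "d > 0" and d: "\<And>u. u \<noteq> 0 \<Longrightarrow> \<bar>u\<bar> < d \<Longrightarrow> \<bar>(\<rho> (x0 + u) - \<rho> x0) / u - D\<bar> < r"
    unfolding LIM_eq using r0 by (metis real_norm_def diff_zero)
  define h where "h = d / (R + 1)"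
  have h0: "h > 0" using d0 R by (auto simp: h_def)
  have hR: "h * R < d" using d0 R by (simp add: h_def field_simps)
  show ?thesis
  proof (intro exI[of _ h] conjI allI impI h0)
    fix s assume s: "\<bar>s\<bar> \<le> R"
    define q where "q = (\<rho> (x0 + h * s) - \<rho> x0) / (h * D)"
    have qs: "\<bar>q - s\<bar> \<le> \<eta>"
    proof (cases "s = 0")
      case True
      then show ?thesis using \<eta>0 by (simp add: q_def)
    next
      case False
      define u where "u = h * s"
      have u0: "u \<noteq> 0" using False h0 by (simp add: u_def)
      have ud: "\<bar>u\<bar> < d" using hR s h0 unfolding u_def
        by (metis abs_mult abs_of_pos mult_left_mono order_le_less_trans less_imp_le)
      have e1: "\<bar>(\<rho> (x0 + u) - \<rho> x0) / u - D\<bar> < r" by (rule d[OF u0 ud])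
      have "q - s = ((\<rho> (x0 + u) - \<rho> x0) / u - D) * u / (h * D)"
        using u0 h0 D by (simp add: q_def u_def field_simps)
      then have "\<bar>q - s\<bar> = \<bar>(\<rho> (x0 + u) - \<rho> x0) / u - D\<bar> * \<bar>s\<bar> / \<bar>D\<bar>"
        using h0 D by (simp add: u_def abs_mult)
      also have "\<dots> \<le> r * R / \<bar>D\<bar>"
        using e1 s D by (intro divide_right_mono mult_mono) auto
      also have "\<dots> = \<eta> * (R / (R + 1))"
      proof -
        have nz: "\<bar>D\<bar> \<noteq> 0" "R + 1 \<noteq> 0" using D R by auto
        show ?thesis unfolding r_def using D R by (simp add: divide_simps)
      qed
      also have "\<dots> \<le> \<eta> * 1" using \<eta>0 R by (intro mult_left_mono) auto
      finally show ?thesis by simp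
    qed
    have trm: "\<bar>\<rho> (\<alpha> k / (h * D) * \<rho> (x0 + h * s) + (\<beta> k - \<alpha> k * \<rho> x0 / (h * D))) - \<rho> (\<alpha> k * s + \<beta> k)\<bar>
        \<le> \<epsilon> / Cc" if k: "k < K" for k
    proof -
      have eq: "\<alpha> k / (h * D) * \<rho> (x0 + h * s) + (\<beta> k - \<alpha> k * \<rho> x0 / (h * D)) = \<alpha> k * q + \<beta> k"
        using h0 D by (simp add: q_def field_simps)
      have ak: "\<bar>\<alpha> k\<bar> \<le> A" unfolding A_def using k by (intro member_le_sum) auto
      have bk: "\<bar>\<alpha> k\<bar> * (R + 1) + \<bar>\<beta> k\<bar> \<le> M" unfolding M_def using k
        by (intro member_le_sum[where f = "\<lambda>k. \<bar>\<alpha> k\<bar> * (R + 1) + \<bar>\<beta> k\<bar>"]) (use R in auto)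
      have q1: "\<bar>q\<bar> \<le> R + 1" using qs s \<eta>1 by linarith
      have "\<bar>\<alpha> k * q + \<beta> k\<bar> \<le> \<bar>\<alpha> k\<bar> * (R + 1) + \<bar>\<beta> k\<bar>"
      proof -
        have "\<bar>\<alpha> k * q + \<beta> k\<bar> \<le> \<bar>\<alpha> k\<bar> * \<bar>q\<bar> + \<bar>\<beta> k\<bar>"
          using abs_triangle_ineq[of "\<alpha> k * q" "\<beta> k"] by (simp add: abs_mult)
        moreover have "\<bar>\<alpha> k\<bar> * \<bar>q\<bar> \<le> \<bar>\<alpha> k\<bar> * (R + 1)" using q1 by (intro mult_left_mono) auto
        ultimately show ?thesis by linarith
      qed
      then have u: "\<alpha> k * q + \<beta> k \<in> {-M..M}" using bk by auto
      have "\<bar>\<alpha> k * s + \<beta> k\<bar> \<le> \<bar>\<alpha> k\<bar> * (R + 1) + \<bar>\<beta> k\<bar>"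
      proof -
        have "\<bar>\<alpha> k * s + \<beta> k\<bar> \<le> \<bar>\<alpha> k\<bar> * \<bar>s\<bar> + \<bar>\<beta> k\<bar>"
          using abs_triangle_ineq[of "\<alpha> k * s" "\<beta> k"] by (simp add: abs_mult)
        moreover have "\<bar>\<alpha> k\<bar> * \<bar>s\<bar> \<le> \<bar>\<alpha> k\<bar> * (R + 1)" using s by (intro mult_left_mono) auto
        ultimately show ?thesis by linarith
      qed
      then have v: "\<alpha> k * s + \<beta> k \<in> {-M..M}" using bk by auto
      have "\<bar>(\<alpha> k * q + \<beta> k) - (\<alpha> k * s + \<beta> k)\<bar> = \<bar>\<alpha> k\<bar> * \<bar>q - s\<bar>"
        by (simp add: abs_mult[symmetric] algebra_simps)
      also have "\<dots> \<le> A * \<eta>" using ak qs by (intro mult_mono) auto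
      finally have "dist (\<alpha> k * q + \<beta> k) (\<alpha> k * s + \<beta> k) < \<delta>" using A\<eta> by (simp add: dist_real_def)
      from \<delta>[OF v u this] have "\<bar>\<rho> (\<alpha> k * q + \<beta> k) - \<rho> (\<alpha> k * s + \<beta> k)\<bar> < \<epsilon> / Cc" by (simp add: dist_real_def)
      then show ?thesis unfolding eq by simp
    qed
    have "\<bar>Tf \<rho> K c0 c (\<lambda>k. \<alpha> k / (h * D)) (\<lambda>k. \<beta> k - \<alpha> k * \<rho> x0 / (h * D)) (\<rho> (x0 + h * s))
       - Tf \<rho> K c0 c \<alpha> \<beta> s\<bar> = \<bar>\<Sum>k<K. c k * (\<rho> (\<alpha> k / (h * D) * \<rho> (x0 + h * s) + (\<beta> k - \<alpha> k * \<rho> x0 / (h * D))) - \<rho> (\<alpha> k * s + \<beta> k))\<bar>"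
      by (simp add: Tf_def sum_subtractf algebra_simps)
    also have "\<dots> \<le> (\<Sum>k<K. \<bar>c k\<bar> * (\<epsilon> / Cc))"
    proof (rule order_trans[OF sum_abs], rule sum_mono)
      fix k assume "k \<in> {..<K}"
      then show "\<bar>c k * (\<rho> (\<alpha> k / (h * D) * \<rho> (x0 + h * s) + (\<beta> k - \<alpha> k * \<rho> x0 / (h * D))) - \<rho> (\<alpha> k * s + \<beta> k))\<bar> \<le> \<bar>c k\<bar> * (\<epsilon> / Cc)"
        unfolding abs_mult by (intro mult_left_mono trm) auto
    qed
    also have "\<dots> = (\<Sum>k<K. \<bar>c k\<bar>) * (\<epsilon> / Cc)" by (rule sum_distrib_right[symmetric])
    also have "\<dots> \<le> Cc * (\<epsilon> / Cc)" using Cc eps by (intro mult_right_mono) auto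
    also have "\<dots> = \<epsilon>" using Cc by simp
    finally show "\<bar>Tf \<rho> K c0 c (\<lambda>k. \<alpha> k / (h * D)) (\<lambda>k. \<beta> k - \<alpha> k * \<rho> x0 / (h * D)) (\<rho> (x0 + h * s))
       - Tf \<rho> K c0 c \<alpha> \<beta> s\<bar> \<le> \<epsilon>" .
  qed
qed



lemma mono_bound:
  fixes \<rho> :: "real \<Rightarrow> real"
  assumes incr: "mono \<rho>" and h: "h > 0" and s: "\<bar>s\<bar> \<le> R"
  shows "\<bar>\<rho> (h * s + x0)\<bar> \<le> \<bar>\<rho> (x0 - h * R)\<bar> + \<bar>\<rho> (x0 + h * R)\<bar>"
proof -
  have s1: "- R \<le> s" "s \<le> R" using s by auto
  have "h * (- R) \<le> h * s" using s1(1) h by (rule mult_left_mono[OF _ less_imp_le])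
  then have a: "x0 - h * R \<le> h * s + x0" by simp
  have "h * s \<le> h * R" using s1(2) h by (rule mult_left_mono[OF _ less_imp_le])
  then have b: "h * s + x0 \<le> x0 + h * R" by simp
  have "\<rho> (x0 - h * R) \<le> \<rho> (h * s + x0)" using incr a by (rule monoD)
  moreover have "\<rho> (h * s + x0) \<le> \<rho> (x0 + h * R)" using incr b by (rule monoD)
  ultimately show ?thesis by linarith
qed

lemma abs_diff_le_abs_add: "\<bar>a - c\<bar> \<le> \<bar>a - b\<bar> + \<bar>b - (c::real)\<bar>"
  by arith

lemma deep:
  fixes \<rho> :: "real \<Rightarrow> real"
  assumes cont: "continuous_on UNIV \<rho>" and der: "(\<rho> has_real_derivative D) (at x0)"
    and D: "D \<noteq> 0" and incr: "mono \<rho>"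
  shows "(\<forall>k\<in>set (n # m # ms). 0 < k) \<Longrightarrow> K \<le> last (m # ms) \<Longrightarrow> i0 < n \<Longrightarrow> 0 \<le> R \<Longrightarrow> 0 < \<epsilon> \<Longrightarrow>
    \<exists>\<Phi>. length \<Phi> = length (n # m # ms) \<and>
      (\<forall>y. \<bar>y i0\<bar> \<le> R \<longrightarrow> \<bar>hidden_eval \<rho> (n # m # ms) \<Phi> y - Tf \<rho> K c0 c \<alpha> \<beta> (y i0)\<bar> \<le> \<epsilon>)"
proof (induction ms arbitrary: n m i0 R \<epsilon> \<alpha> \<beta>)
  case Nil
  define \<Phi> where "\<Phi> = [(\<lambda>i j. if j = i0 then \<alpha> i else (0::real), \<beta>), (\<lambda>i j. if j < K then c j else 0, \<lambda>_. c0)]"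
  have "K \<le> m" "i0 < n" using Nil by auto
  from base2[OF this] have eq: "\<And>y. hidden_eval \<rho> [n, m] \<Phi> y = Tf \<rho> K c0 c \<alpha> \<beta> (y i0)" unfolding \<Phi>_def .
  have len: "length \<Phi> = length [n, m]" by (simp add: \<Phi>_def)
  show ?case using Nil.prems eq len by (intro exI[of _ \<Phi>]) simp
next
  case (Cons m' ms')
  have e2: "\<epsilon> / 2 > 0" using Cons by simp
  obtain h where h0: "h > 0" and hs: "\<And>s. \<bar>s\<bar> \<le> R \<Longrightarrow>
     \<bar>Tf \<rho> K c0 c (\<lambda>k. \<alpha> k / (h * D)) (\<lambda>k. \<beta> k - \<alpha> k * \<rho> x0 / (h * D)) (\<rho> (x0 + h * s))
       - Tf \<rho> K c0 c \<alpha> \<beta> s\<bar> \<le> \<epsilon> / 2"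
    using approx_step[OF cont der D \<open>0 \<le> R\<close> e2] by blast
  define R' where "R' = \<bar>\<rho> (x0 - h * R)\<bar> + \<bar>\<rho> (x0 + h * R)\<bar>"
  have R'0: "0 \<le> R'" by (simp add: R'_def)
  have m0: "0 < m" using Cons.prems by simp
  obtain \<Phi>' where l\<Phi>': "length \<Phi>' = length (m # m' # ms')" and \<Phi>':
    "\<And>y. \<bar>y 0\<bar> \<le> R' \<Longrightarrow> \<bar>hidden_eval \<rho> (m # m' # ms') \<Phi>' y
        - Tf \<rho> K c0 c (\<lambda>k. \<alpha> k / (h * D)) (\<lambda>k. \<beta> k - \<alpha> k * \<rho> x0 / (h * D)) (y 0)\<bar> \<le> \<epsilon> / 2"
  proof -
    have "\<forall>k\<in>set (m # m' # ms'). 0 < k" "K \<le> last (m' # ms')" using Cons.prems by auto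
    from Cons.IH[OF this m0 R'0 e2, of "\<lambda>k. \<alpha> k / (h * D)" "\<lambda>k. \<beta> k - \<alpha> k * \<rho> x0 / (h * D)"]
    show ?thesis using that by blast
  qed
  define A :: "nat \<Rightarrow> nat \<Rightarrow> real" where "A = (\<lambda>i j. if j = i0 then h else 0)"
  define b :: "nat \<Rightarrow> real" where "b = (\<lambda>_. x0)"
  show ?case
  proof (intro exI[of _ "(A, b) # \<Phi>'"] conjI allI impI)
    show "length ((A, b) # \<Phi>') = length (n # m # m' # ms')" using l\<Phi>' by simp
    fix y :: "nat \<Rightarrow> real" assume y: "\<bar>y i0\<bar> \<le> R"
    have z0: "aff n A b y 0 = h * y i0 + x0"
      using Cons.prems by (simp add: aff_def A_def b_def sum_delta_mult)
    have zb: "\<bar>\<rho> (aff n A b y 0)\<bar> \<le> R'" unfolding z0 R'_def by (rule mono_bound[OF incr h0 y])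
    have heq: "hidden_eval \<rho> (n # m # m' # ms') ((A, b) # \<Phi>') y = hidden_eval \<rho> (m # m' # ms') \<Phi>' (\<lambda>i. \<rho> (aff n A b y i))"
      by simp
    have zeq: "\<rho> (aff n A b y 0) = \<rho> (x0 + h * y i0)" by (simp add: z0 add.commute)
    have "\<bar>hidden_eval \<rho> (n # m # m' # ms') ((A, b) # \<Phi>') y - Tf \<rho> K c0 c \<alpha> \<beta> (y i0)\<bar>
      \<le> \<bar>hidden_eval \<rho> (m # m' # ms') \<Phi>' (\<lambda>i. \<rho> (aff n A b y i))
          - Tf \<rho> K c0 c (\<lambda>k. \<alpha> k / (h * D)) (\<lambda>k. \<beta> k - \<alpha> k * \<rho> x0 / (h * D)) (\<rho> (aff n A b y 0))\<bar>
        + \<bar>Tf \<rho> K c0 c (\<lambda>k. \<alpha> k / (h * D)) (\<lambda>k. \<beta> k - \<alpha> k * \<rho> x0 / (h * D)) (\<rho> (x0 + h * y i0))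
          - Tf \<rho> K c0 c \<alpha> \<beta> (y i0)\<bar>"
      unfolding heq zeq by (rule abs_diff_le_abs_add)
    also have "\<dots> \<le> \<epsilon> / 2 + \<epsilon> / 2"
      by (intro add_mono \<Phi>'[of "\<lambda>i. \<rho> (aff n A b y i)", OF zb] hs[OF y])
    also have "\<epsilon> / 2 + \<epsilon> / 2 = \<epsilon>" by simp
    finally show "\<bar>hidden_eval \<rho> (n # m # m' # ms') ((A, b) # \<Phi>') y - Tf \<rho> K c0 c \<alpha> \<beta> (y i0)\<bar> \<le> \<epsilon>" .
  qed
qed



lemma sum_delta_univ:
  fixes x :: "real^'d::finite"
  shows "(\<Sum>j'\<in>UNIV. (if j' = j then a else 0) * x $ j') = a * x $ j"
proof -
  have "(\<Sum>j'\<in>UNIV. (if j' = j then a else 0) * x $ j') = (\<Sum>j'\<in>UNIV. if j' = j then a * x $ j' else 0)"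
    by (rule sum.cong) auto
  also have "\<dots> = a * x $ j" by (subst sum.delta) simp_all
  finally show ?thesis .
qed

lemma net_approx:
  fixes \<rho> :: "real \<Rightarrow> real" and j :: "'d::finite"
  assumes cont: "continuous_on UNIV \<rho>" and der: "(\<rho> has_real_derivative D) (at x0)"
    and D: "D \<noteq> 0" and incr: "mono \<rho>"
    and Ns: "Ns \<noteq> []" and widths: "\<forall>n\<in>set Ns. 0 < n" and K: "K \<le> last Ns"
    and R: "0 \<le> R" and eps: "0 < \<epsilon>"
  shows "\<exists>g\<in>(RNN \<rho> Ns :: (real^'d \<Rightarrow> real) set). \<forall>x::real^'d. \<bar>x $ j\<bar> \<le> R \<longrightarrow> \<bar>g x - Tf \<rho> K c0 c \<alpha> \<beta> (x $ j)\<bar> \<le> \<epsilon>"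
proof -
  obtain n ms where Nsd: "Ns = n # ms" using Ns by (cases Ns) auto
  show ?thesis
  proof (cases ms)
    case Nil
    define A1 :: "nat \<Rightarrow> 'd \<Rightarrow> real" where "A1 = (\<lambda>i j'. if j' = j then \<alpha> i else 0)"
    define \<Phi> :: "((nat \<Rightarrow> nat \<Rightarrow> real) \<times> (nat \<Rightarrow> real)) list" where "\<Phi> = [(\<lambda>i j. if j < K then c j else 0, \<lambda>_. c0)]"
    have Kn: "K \<le> n" using K Nsd Nil by simp
    have eq: "realization \<rho> Ns A1 \<beta> \<Phi> x = Tf \<rho> K c0 c \<alpha> \<beta> (x $ j)" for x :: "real^'d"
      unfolding realization_def A1_def \<Phi>_def Nsd Nil
      by (simp add: aff_def sum_delta_univ sum_if_lt_mult[OF Kn] Tf_def)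
    have "realization \<rho> Ns A1 \<beta> \<Phi> \<in> RNN \<rho> Ns"
      unfolding RNN_def by (intro CollectI exI[of _ A1] exI[of _ \<beta>] exI[of _ \<Phi>]) (simp add: \<Phi>_def Nsd Nil)
    then show ?thesis using eq eps by (intro bexI[of _ "realization \<rho> Ns A1 \<beta> \<Phi>"]) auto
  next
    case (Cons m ms')
    have e2: "\<epsilon> / 2 > 0" using eps by simp
    obtain h where h0: "h > 0" and hs: "\<And>s. \<bar>s\<bar> \<le> R \<Longrightarrow>
       \<bar>Tf \<rho> K c0 c (\<lambda>k. \<alpha> k / (h * D)) (\<lambda>k. \<beta> k - \<alpha> k * \<rho> x0 / (h * D)) (\<rho> (x0 + h * s))
         - Tf \<rho> K c0 c \<alpha> \<beta> s\<bar> \<le> \<epsilon> / 2"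
      using approx_step[OF cont der D R e2] by blast
    define R' where "R' = \<bar>\<rho> (x0 - h * R)\<bar> + \<bar>\<rho> (x0 + h * R)\<bar>"
    have R'0: "0 \<le> R'" by (simp add: R'_def)
    have n0: "0 < n" using widths Nsd by simp
    have w': "\<forall>k\<in>set (n # m # ms'). 0 < k" "K \<le> last (m # ms')" using widths K Nsd Cons by auto
    obtain \<Phi> where l\<Phi>: "length \<Phi> = length (n # m # ms')" and \<Phi>:
      "\<And>y. \<bar>y 0\<bar> \<le> R' \<Longrightarrow> \<bar>hidden_eval \<rho> (n # m # ms') \<Phi> y
          - Tf \<rho> K c0 c (\<lambda>k. \<alpha> k / (h * D)) (\<lambda>k. \<beta> k - \<alpha> k * \<rho> x0 / (h * D)) (y 0)\<bar> \<le> \<epsilon> / 2"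
      using deep[OF cont der D incr w' n0 R'0 e2, of c0 c "\<lambda>k. \<alpha> k / (h * D)" "\<lambda>k. \<beta> k - \<alpha> k * \<rho> x0 / (h * D)"]
      by blast
    define A1 :: "nat \<Rightarrow> 'd \<Rightarrow> real" where "A1 = (\<lambda>i j'. if j' = j then h else 0)"
    define b1 :: "nat \<Rightarrow> real" where "b1 = (\<lambda>_. x0)"
    have mem: "realization \<rho> Ns A1 b1 \<Phi> \<in> RNN \<rho> Ns"
      unfolding RNN_def by (intro CollectI exI[of _ A1] exI[of _ b1] exI[of _ \<Phi>]) (simp add: l\<Phi> Nsd Cons)
    have "\<bar>realization \<rho> Ns A1 b1 \<Phi> x - Tf \<rho> K c0 c \<alpha> \<beta> (x $ j)\<bar> \<le> \<epsilon>" if x: "\<bar>x $ j\<bar> \<le> R" for x :: "real^'d"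
    proof -
      have req: "realization \<rho> Ns A1 b1 \<Phi> x = hidden_eval \<rho> (n # m # ms') \<Phi> (\<lambda>i. \<rho> (h * x $ j + x0))"
        unfolding realization_def A1_def b1_def Nsd Cons by (simp add: sum_delta_univ)
      have zb: "\<bar>(\<lambda>i. \<rho> (h * x $ j + x0)) 0\<bar> \<le> R'" unfolding R'_def by (rule mono_bound[OF incr h0 x])
      have zeq: "\<rho> (h * x $ j + x0) = \<rho> (x0 + h * x $ j)" by (simp add: add.commute)
      have "\<bar>realization \<rho> Ns A1 b1 \<Phi> x - Tf \<rho> K c0 c \<alpha> \<beta> (x $ j)\<bar>
        \<le> \<bar>hidden_eval \<rho> (n # m # ms') \<Phi> (\<lambda>i. \<rho> (h * x $ j + x0))
            - Tf \<rho> K c0 c (\<lambda>k. \<alpha> k / (h * D)) (\<lambda>k. \<beta> k - \<alpha> k * \<rho> x0 / (h * D)) ((\<lambda>i. \<rho> (h * x $ j + x0)) 0)\<bar>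
          + \<bar>Tf \<rho> K c0 c (\<lambda>k. \<alpha> k / (h * D)) (\<lambda>k. \<beta> k - \<alpha> k * \<rho> x0 / (h * D)) (\<rho> (x0 + h * x $ j))
            - Tf \<rho> K c0 c \<alpha> \<beta> (x $ j)\<bar>"
        unfolding req zeq by (rule abs_diff_le_abs_add)
      also have "\<dots> \<le> \<epsilon> / 2 + \<epsilon> / 2"
        by (intro add_mono \<Phi>[OF zb] hs[OF x])
      also have "\<epsilon> / 2 + \<epsilon> / 2 = \<epsilon>" by simp
      finally show ?thesis .
    qed
    then show ?thesis using mem by blast
  qed
qed



lemma separated_countable:
  fixes E :: "'a::{metric_space, second_countable_topology} set"
  assumes r: "r > 0" and sep: "\<And>x y. x \<in> E \<Longrightarrow> y \<in> E \<Longrightarrow> dist x y < r \<Longrightarrow> x = y"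
  shows "countable E"
proof -
  obtain D :: "'a set" where D: "countable D" "\<And>X. open X \<Longrightarrow> X \<noteq> {} \<Longrightarrow> \<exists>d\<in>D. d \<in> X"
    using countable_dense_exists by blast
  have "\<exists>d\<in>D. d \<in> ball x (r / 2)" for x using D(2)[of "ball x (r / 2)"] r by auto
  then obtain sel where sel: "\<And>x. sel x \<in> D" "\<And>x. sel x \<in> ball x (r / 2)" by metis
  have "inj_on sel E"
  proof (rule inj_onI)
    fix x y assume xy: "x \<in> E" "y \<in> E" "sel x = sel y"
    have "dist x y \<le> dist x (sel x) + dist (sel y) y" using xy(3) dist_triangle[of x y "sel x"]
      by (simp add: dist_commute)
    also have "\<dots> < r / 2 + r / 2" using sel(2)[of x] sel(2)[of y] by (intro add_strict_mono) (auto simp: dist_commute)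
    finally show "x = y" using sep[OF xy(1,2)] by simp
  qed
  moreover have "countable (sel ` E)" using D(1) sel(1) by (meson countable_subset image_subset_iff)
  ultimately show ?thesis by (rule countable_image_inj_on[rotated])
qed

lemma finite_min_delta:
  assumes "\<And>j::'d::finite. \<exists>\<delta>>0. Q j \<delta>" and mono: "\<And>j \<delta> \<delta>'. Q j \<delta> \<Longrightarrow> 0 < \<delta>' \<Longrightarrow> \<delta>' \<le> \<delta> \<Longrightarrow> Q j \<delta>'"
  shows "\<exists>m::nat. \<forall>j. Q j (1 / Suc m)"
proof -
  obtain df where df: "\<And>j. df j > 0 \<and> Q j (df j)" using assms(1) by metis
  define \<delta> where "\<delta> = Min (range df)"
  have \<delta>0: "\<delta> > 0" unfolding \<delta>_def using df by (subst Min_gr_iff) auto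
  have \<delta>le: "\<delta> \<le> df j" for j unfolding \<delta>_def by (rule Min_le) auto
  obtain m where m: "inverse (real (Suc m)) < \<delta>" using reals_Archimedean[OF \<delta>0] by blast
  have "Q j (1 / Suc m)" for j
    using mono[of j "df j" "1 / Suc m"] df[of j] \<delta>le[of j] m by (auto simp: inverse_eq_divide)
  then show ?thesis by blast
qed

lemma good_point:
  fixes S :: "(real^'d::finite) set"
  assumes unc: "uncountable S"
  shows "\<exists>x\<in>S. \<exists>j. \<forall>\<delta>>0. (\<exists>y\<in>S. dist y x < \<delta> \<and> y $ j < x $ j) \<and> (\<exists>y\<in>S. dist y x < \<delta> \<and> y $ j > x $ j)"
proof (rule ccontr)
  assume "\<not> ?thesis"
  then have bad: "\<forall>x\<in>S. \<forall>j. \<exists>\<delta>>0. (\<forall>y\<in>S. dist y x < \<delta> \<longrightarrow> x $ j \<le> y $ j) \<or> (\<forall>y\<in>S. dist y x < \<delta> \<longrightarrow> y $ j \<le> x $ j)"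
    by (metis not_le)
  define P where "P x \<sigma> m \<longleftrightarrow> (\<forall>j. \<forall>y\<in>S. dist y x < 1 / Suc m \<longrightarrow> (if \<sigma> j then x $ j \<le> y $ j else y $ j \<le> x $ j))"
    for x :: "real^'d" and \<sigma> :: "'d \<Rightarrow> bool" and m :: nat
  have ex: "\<exists>\<sigma> m. P x \<sigma> m" if x: "x \<in> S" for x
  proof -
    have "\<exists>m::nat. \<forall>j. (\<exists>s. \<forall>y\<in>S. dist y x < 1 / Suc m \<longrightarrow> (if s then x $ j \<le> y $ j else y $ j \<le> x $ j))"
    proof (rule finite_min_delta)
      fix j
      obtain \<delta> where "\<delta> > 0" "(\<forall>y\<in>S. dist y x < \<delta> \<longrightarrow> x $ j \<le> y $ j) \<or> (\<forall>y\<in>S. dist y x < \<delta> \<longrightarrow> y $ j \<le> x $ j)"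
        using bad x by blast
      then show "\<exists>\<delta>>0. \<exists>s. \<forall>y\<in>S. dist y x < \<delta> \<longrightarrow> (if s then x $ j \<le> y $ j else y $ j \<le> x $ j)"
        by (metis (full_types))
    next
      fix j \<delta> \<delta>'
      assume "\<exists>s. \<forall>y\<in>S. dist y x < \<delta> \<longrightarrow> (if s then x $ j \<le> y $ j else y $ j \<le> x $ j)" "0 < \<delta>'" "\<delta>' \<le> \<delta>"
      then show "\<exists>s. \<forall>y\<in>S. dist y x < \<delta>' \<longrightarrow> (if s then x $ j \<le> y $ j else y $ j \<le> x $ j)"
        by (meson less_le_trans)
    qed
    then obtain m where "\<forall>j. \<exists>s. \<forall>y\<in>S. dist y x < 1 / Suc m \<longrightarrow> (if s then x $ j \<le> y $ j else y $ j \<le> x $ j)" by blast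
    then obtain \<sigma> where "\<forall>j. \<forall>y\<in>S. dist y x < 1 / Suc m \<longrightarrow> (if \<sigma> j then x $ j \<le> y $ j else y $ j \<le> x $ j)"
      by metis
    then show ?thesis unfolding P_def by blast
  qed
  define E where "E \<sigma> m = {x\<in>S. P x \<sigma> m}" for \<sigma> m
  have cE: "countable (E \<sigma> m)" for \<sigma> m
  proof (rule separated_countable[of "1 / Suc m"])
    fix x y assume xy: "x \<in> E \<sigma> m" "y \<in> E \<sigma> m" "dist x y < 1 / Suc m"
    have "x $ j = y $ j" for j
    proof -
      have "if \<sigma> j then x $ j \<le> y $ j else y $ j \<le> x $ j"
        using xy unfolding E_def P_def by (auto simp: dist_commute)
      moreover have "if \<sigma> j then y $ j \<le> x $ j else x $ j \<le> y $ j"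
        using xy unfolding E_def P_def by auto
      ultimately show ?thesis by (auto split: if_splits)
    qed
    then show "x = y" by (simp add: vec_eq_iff)
  qed simp
  have "S \<subseteq> (\<Union>\<sigma>\<in>UNIV. \<Union>m\<in>UNIV. E \<sigma> m)" using ex unfolding E_def by blast
  moreover have "countable (\<Union>\<sigma>\<in>(UNIV :: ('d \<Rightarrow> bool) set). \<Union>m\<in>(UNIV :: nat set). E \<sigma> m)"
  proof -
    have c1: "countable (UNIV :: ('d \<Rightarrow> bool) set)" by (rule countable_finite) simp
    have c2: "countable (UNIV :: nat set)" by simp
    show ?thesis by (intro countable_UN c1 c2 cE)
  qed
  ultimately have "countable S" by (rule countable_subset)
  then show False using unc by simp
qed

lemma AE_pos_exists:
  assumes "AE x in M. P x" "A \<in> sets M" "emeasure M A > 0"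
  shows "\<exists>x\<in>A. P x"
proof (rule ccontr)
  assume nt: "\<not> ?thesis"
  from assms(1) obtain N where N: "{x \<in> space M. \<not> P x} \<subseteq> N" "emeasure M N = 0" "N \<in> sets M" by (rule AE_E)
  have "A \<subseteq> N" using N(1) nt sets.sets_into_space[OF assms(2)] by blast
  then have "emeasure M A \<le> emeasure M N" using N(3) by (rule emeasure_mono)
  then show False using N(2) assms(3) by simp
qed

lemma cont_AE_value:
  fixes g f :: "'a::metric_space \<Rightarrow> real"
  assumes cont: "isCont g x" and borel: "sets M = sets borel" and ae: "AE w in M. f w = g w"
    and near: "\<And>\<delta>. \<delta> > 0 \<Longrightarrow> \<exists>y r0. dist y x < \<delta> \<and> (\<forall>r>0. emeasure M (ball y r) > 0) \<and> r0 > 0 \<and> (\<forall>w\<in>ball y r0. f w = v)"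
  shows "g x = v"
proof (rule ccontr)
  assume ne: "g x \<noteq> v"
  define e where "e = \<bar>g x - v\<bar>"
  have e0: "e > 0" using ne by (simp add: e_def)
  obtain \<delta> where \<delta>0: "\<delta> > 0" and \<delta>: "\<And>w. dist w x < \<delta> \<Longrightarrow> dist (g w) (g x) < e"
    using cont e0 unfolding continuous_at_eps_delta by metis
  obtain y r0 where y: "dist y x < \<delta> / 2" "\<forall>r>0. emeasure M (ball y r) > 0" "r0 > 0" "\<forall>w\<in>ball y r0. f w = v"
    using near[of "\<delta> / 2"] \<delta>0 by auto
  define r where "r = min r0 (\<delta> / 2)"
  have r0: "r > 0" using y(3) \<delta>0 by (simp add: r_def)
  have "ball y r \<in> sets M" using borel by simp
  then obtain w where w: "w \<in> ball y r" "f w = g w" using AE_pos_exists[OF ae _ y(2)[rule_format, OF r0]] by blast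
  have "dist w x \<le> dist y w + dist y x" by (rule dist_triangle3)
  also have "\<dots> < \<delta> / 2 + \<delta> / 2" using w(1) y(1) by (intro add_strict_mono) (auto simp: r_def)
  finally have "dist (g w) (g x) < e" using \<delta> by simp
  moreover have "f w = v" using y(4) w(1) by (auto simp: r_def)
  ultimately show False using w(2) by (simp add: e_def dist_real_def abs_minus_commute)
qed



lemma limits_bounded:
  fixes \<phi> :: "real \<Rightarrow> real"
  assumes cont: "continuous_on UNIV \<phi>" and top: "(\<phi> \<longlongrightarrow> b) at_top" and bot: "(\<phi> \<longlongrightarrow> a) at_bot"
  shows "\<exists>M. \<forall>z. \<bar>\<phi> z\<bar> \<le> M"
proof -
  have "eventually (\<lambda>z. dist (\<phi> z) b < 1) at_top" using top by (rule tendstoD) simp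
  then obtain Z1 where Z1: "\<And>z. z \<ge> Z1 \<Longrightarrow> dist (\<phi> z) b < 1" by (auto simp: eventually_at_top_linorder)
  have "eventually (\<lambda>z. dist (\<phi> z) a < 1) at_bot" using bot by (rule tendstoD) simp
  then obtain Z2 where Z2: "\<And>z. z \<le> Z2 \<Longrightarrow> dist (\<phi> z) a < 1" by (auto simp: eventually_at_bot_linorder)
  have "compact (\<phi> ` {Z2..Z1})" by (rule compact_continuous_image[OF continuous_on_subset[OF cont]]) auto
  then have "bounded (\<phi> ` {Z2..Z1})" by (rule compact_imp_bounded)
  then obtain M0 where "\<forall>x\<in>\<phi> ` {Z2..Z1}. norm x \<le> M0" unfolding bounded_iff by blast
  then have M0: "\<And>z. z \<in> {Z2..Z1} \<Longrightarrow> \<bar>\<phi> z\<bar> \<le> M0" by auto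
  have "\<bar>\<phi> z\<bar> \<le> \<bar>M0\<bar> + \<bar>a\<bar> + \<bar>b\<bar> + 1" for z
  proof (cases "z \<ge> Z1")
    case True then show ?thesis using Z1[of z] by (simp add: dist_real_def)
  next
    case False
    show ?thesis
    proof (cases "z \<le> Z2")
      case True then show ?thesis using Z2[of z] by (simp add: dist_real_def)
    next
      case False2: False
      then show ?thesis using M0[of z] False by auto
    qed
  qed
  then show ?thesis by blast
qed

lemma case_b:
  fixes \<rho> :: "real \<Rightarrow> real"
  assumes incr: "mono \<rho>" and bnd: "bounded (range \<rho>)"
    and der: "(\<rho> has_real_derivative D) (at x0)" and D: "D \<noteq> 0"
  shows "\<exists>a b. a \<noteq> b \<and> (\<rho> \<longlongrightarrow> b) at_top \<and> (\<rho> \<longlongrightarrow> a) at_bot"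
proof -
  have bab: "bdd_above (range \<rho>)" "bdd_below (range \<rho>)"
    using bnd by (auto intro: bounded_imp_bdd_above bounded_imp_bdd_below)
  define b where "b = Sup (range \<rho>)"
  define a where "a = Inf (range \<rho>)"
  have le_b: "\<rho> z \<le> b" for z unfolding b_def using bab by (intro cSUP_upper) auto
  have a_le: "a \<le> \<rho> z" for z unfolding a_def using bab by (intro cINF_lower) auto
  have top: "(\<rho> \<longlongrightarrow> b) at_top"
  proof (rule order_tendstoI)
    fix y assume "y < b"
    then obtain z where z: "y < \<rho> z" unfolding b_def using less_cSUP_iff[of UNIV \<rho> y] bab by auto
    show "eventually (\<lambda>x. y < \<rho> x) at_top"
      unfolding eventually_at_top_linorder
      by (rule exI[of _ z]) (meson z incr monoD order_less_le_trans)
  next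
    fix y assume "b < y"
    then show "eventually (\<lambda>x. \<rho> x < y) at_top" using le_b by (intro always_eventually allI) (blast intro: le_less_trans)
  qed
  have bot: "(\<rho> \<longlongrightarrow> a) at_bot"
  proof (rule order_tendstoI)
    fix y assume "a < y"
    then obtain z where z: "\<rho> z < y" unfolding a_def using cINF_less_iff[of UNIV \<rho> y] bab by auto
    show "eventually (\<lambda>x. \<rho> x < y) at_bot"
      unfolding eventually_at_bot_linorder
      by (rule exI[of _ z]) (meson z incr monoD order_le_less_trans)
  next
    fix y assume "y < a"
    then show "eventually (\<lambda>x. y < \<rho> x) at_bot" using a_le by (intro always_eventually allI) (blast intro: less_le_trans)
  qed
  have "a \<noteq> b"
  proof
    assume "a = b"
    then have "\<rho> = (\<lambda>_. a)" using le_b a_le by (intro ext) (metis order_antisym)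
    then have "((\<lambda>_. a) has_real_derivative D) (at x0)" using der by simp
    moreover have "((\<lambda>_. a) has_real_derivative 0) (at x0)" by simp
    ultimately have "D = 0" by (rule DERIV_unique)
    then show False using D by simp
  qed
  then show ?thesis using top bot by blast
qed

lemma diff_MVT:
  fixes \<rho> :: "real \<Rightarrow> real"
  assumes cont: "continuous_on UNIV \<rho>" and dif: "\<And>x. z < x \<Longrightarrow> x < z + 1 \<Longrightarrow> \<rho> differentiable (at x)"
  shows "\<exists>\<xi>. z < \<xi> \<and> \<xi> < z + 1 \<and> \<rho> (z + 1) - \<rho> z = deriv \<rho> \<xi>"
proof -
  obtain l \<xi> where "z < \<xi>" "\<xi> < z + 1" "DERIV \<rho> \<xi> :> l" "\<rho> (z + 1) - \<rho> z = (z + 1 - z) * l"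
    using MVT[of z "z + 1" \<rho>] cont dif by (auto intro: continuous_on_subset)
  then show ?thesis by (intro exI[of _ \<xi>]) (auto simp: DERIV_imp_deriv)
qed

lemma case_a_top:
  fixes \<rho> :: "real \<Rightarrow> real"
  assumes cont: "continuous_on UNIV \<rho>" and r: "\<forall>x. r < \<bar>x\<bar> \<longrightarrow> \<rho> differentiable (at x)"
    and lim: "(deriv \<rho> \<longlongrightarrow> l) at_top"
  shows "((\<lambda>z. \<rho> (z + 1) - \<rho> z) \<longlongrightarrow> l) at_top"
  unfolding tendsto_iff
proof (intro allI impI)
  fix e :: real assume e: "e > 0"
  have "eventually (\<lambda>x. dist (deriv \<rho> x) l < e) at_top" using lim e by (rule tendstoD)
  then obtain Z where Z: "\<And>x. x \<ge> Z \<Longrightarrow> dist (deriv \<rho> x) l < e" by (auto simp: eventually_at_top_linorder)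
  show "eventually (\<lambda>z. dist (\<rho> (z + 1) - \<rho> z) l < e) at_top"
    unfolding eventually_at_top_linorder
  proof (intro exI[of _ "max Z \<bar>r\<bar>"] allI impI)
    fix z assume z: "z \<ge> max Z \<bar>r\<bar>"
    have "\<exists>\<xi>. z < \<xi> \<and> \<xi> < z + 1 \<and> \<rho> (z + 1) - \<rho> z = deriv \<rho> \<xi>"
      by (rule diff_MVT[OF cont]) (use r z in auto)
    then obtain \<xi> where "z < \<xi>" "\<rho> (z + 1) - \<rho> z = deriv \<rho> \<xi>" by blast
    then show "dist (\<rho> (z + 1) - \<rho> z) l < e" using Z[of \<xi>] z by auto
  qed
qed

lemma case_a_bot:
  fixes \<rho> :: "real \<Rightarrow> real"
  assumes cont: "continuous_on UNIV \<rho>" and r: "\<forall>x. r < \<bar>x\<bar> \<longrightarrow> \<rho> differentiable (at x)"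
    and lim: "(deriv \<rho> \<longlongrightarrow> l) at_bot"
  shows "((\<lambda>z. \<rho> (z + 1) - \<rho> z) \<longlongrightarrow> l) at_bot"
  unfolding tendsto_iff
proof (intro allI impI)
  fix e :: real assume e: "e > 0"
  have "eventually (\<lambda>x. dist (deriv \<rho> x) l < e) at_bot" using lim e by (rule tendstoD)
  then obtain Z where Z: "\<And>x. x \<le> Z \<Longrightarrow> dist (deriv \<rho> x) l < e" by (auto simp: eventually_at_bot_linorder)
  show "eventually (\<lambda>z. dist (\<rho> (z + 1) - \<rho> z) l < e) at_bot"
    unfolding eventually_at_bot_linorder
  proof (intro exI[of _ "min (Z - 1) (- \<bar>r\<bar> - 2)"] allI impI)
    fix z assume z: "z \<le> min (Z - 1) (- \<bar>r\<bar> - 2)"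
    have "\<exists>\<xi>. z < \<xi> \<and> \<xi> < z + 1 \<and> \<rho> (z + 1) - \<rho> z = deriv \<rho> \<xi>"
      by (rule diff_MVT[OF cont]) (use r z in auto)
    then obtain \<xi> where "\<xi> < z + 1" "\<rho> (z + 1) - \<rho> z = deriv \<rho> \<xi>" by blast
    then show "dist (\<rho> (z + 1) - \<rho> z) l < e" using Z[of \<xi>] z by auto
  qed
qed



lemma phi_exists:
  fixes \<rho> :: "real \<Rightarrow> real" and Ns :: "nat list"
  assumes L2: "Ns \<noteq> []" and widths: "\<forall>n\<in>set Ns. 0 < n"
    and cont: "continuous_on UNIV \<rho>" and incr: "mono \<rho>"
    and der: "(\<rho> has_real_derivative D) (at x0)" and D: "D \<noteq> 0"
    and diff_far: "\<exists>r>0. \<forall>x. r < \<bar>x\<bar> \<longrightarrow> \<rho> differentiable (at x)"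
    and cond_iv: "(\<exists>lp lm'. 0 \<le> lp \<and> 0 \<le> lm' \<and> lp \<noteq> lm' \<and>
                       (deriv \<rho> \<longlongrightarrow> lp) at_top \<and> (deriv \<rho> \<longlongrightarrow> lm') at_bot \<and> 2 \<le> last Ns)
                  \<or> bounded (range \<rho>)"
  shows "\<exists>\<phi> a b K c0 c e. continuous_on UNIV \<phi> \<and> (\<phi> \<longlongrightarrow> b) at_top \<and> (\<phi> \<longlongrightarrow> a) at_bot \<and> a \<noteq> b
     \<and> K \<le> last Ns \<and> (\<forall>z. \<phi> z = c0 + (\<Sum>k<K. c k * \<rho> (z + e k)))"
  using cond_iv
proof
  assume "\<exists>lp lm'. 0 \<le> lp \<and> 0 \<le> lm' \<and> lp \<noteq> lm' \<and>
                       (deriv \<rho> \<longlongrightarrow> lp) at_top \<and> (deriv \<rho> \<longlongrightarrow> lm') at_bot \<and> 2 \<le> last Ns"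
  then obtain lp lm' where l: "lp \<noteq> lm'" "(deriv \<rho> \<longlongrightarrow> lp) at_top" "(deriv \<rho> \<longlongrightarrow> lm') at_bot" "2 \<le> last Ns"
    by blast
  obtain r where r: "\<forall>x. r < \<bar>x\<bar> \<longrightarrow> \<rho> differentiable (at x)" using diff_far by blast
  define \<phi> where "\<phi> = (\<lambda>z. \<rho> (z + 1) - \<rho> z)"
  have "continuous_on UNIV (\<lambda>z. \<rho> (z + 1))"
    by (rule continuous_on_compose2[OF cont]) (auto intro: continuous_intros)
  then have c\<phi>: "continuous_on UNIV \<phi>" unfolding \<phi>_def using cont by (rule continuous_on_diff)
  have t: "(\<phi> \<longlongrightarrow> lp) at_top" unfolding \<phi>_def by (rule case_a_top[OF cont r l(2)])
  have b: "(\<phi> \<longlongrightarrow> lm') at_bot" unfolding \<phi>_def by (rule case_a_bot[OF cont r l(3)])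
  have rep: "\<phi> z = 0 + (\<Sum>k<(2::nat). (\<lambda>k. if k = 0 then 1 else -1) k * \<rho> (z + (\<lambda>k. if k = 0 then 1 else 0) k))" for z
    by (simp add: \<phi>_def numeral_2_eq_2)
  have "continuous_on UNIV \<phi> \<and> (\<phi> \<longlongrightarrow> lp) at_top \<and> (\<phi> \<longlongrightarrow> lm') at_bot \<and> lm' \<noteq> lp
     \<and> (2::nat) \<le> last Ns \<and> (\<forall>z. \<phi> z = 0 + (\<Sum>k<(2::nat). (\<lambda>k. if k = 0 then 1 else -1) k * \<rho> (z + (\<lambda>k. if k = 0 then 1 else 0) k)))"
    using c\<phi> t b l(1) l(4) rep by simp
  then show ?thesis
    by (intro exI[of _ \<phi>] exI[of _ lm'] exI[of _ lp] exI[of _ "2::nat"] exI[of _ "0::real"]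
        exI[of _ "\<lambda>k::nat. if k = 0 then 1 else -1::real"] exI[of _ "\<lambda>k::nat. if k = 0 then 1 else 0::real"])
next
  assume bnd: "bounded (range \<rho>)"
  obtain a b where ab: "a \<noteq> b" "(\<rho> \<longlongrightarrow> b) at_top" "(\<rho> \<longlongrightarrow> a) at_bot"
    using case_b[OF incr bnd der D] by blast
  have K: "1 \<le> last Ns" using widths L2 by (simp add: Suc_le_eq)
  have rep: "\<rho> z = 0 + (\<Sum>k<(1::nat). (\<lambda>_. 1) k * \<rho> (z + (\<lambda>_. 0) k))" for z by simp
  have "continuous_on UNIV \<rho> \<and> (\<rho> \<longlongrightarrow> b) at_top \<and> (\<rho> \<longlongrightarrow> a) at_bot \<and> a \<noteq> b
     \<and> (1::nat) \<le> last Ns \<and> (\<forall>z. \<rho> z = 0 + (\<Sum>k<(1::nat). (\<lambda>_. 1) k * \<rho> (z + (\<lambda>_. 0) k)))"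
    using cont ab K by simp
  then show ?thesis
    by (intro exI[of _ \<rho>] exI[of _ a] exI[of _ b] exI[of _ "1::nat"] exI[of _ "0::real"]
        exI[of _ "\<lambda>k::nat. 1::real"] exI[of _ "\<lambda>k::nat. 0::real"])
qed

lemma Tf_shift:
  assumes rep: "\<forall>z. \<phi> z = c0 + (\<Sum>k<K. c k * \<rho> (z + e k))"
  shows "Tf \<rho> K c0 c (\<lambda>_. real n) (\<lambda>k. e k - real n * t) s = \<phi> (real n * (s - t))"
proof -
  have "Tf \<rho> K c0 c (\<lambda>_. real n) (\<lambda>k. e k - real n * t) s = c0 + (\<Sum>k<K. c k * \<rho> (real n * (s - t) + e k))"
    unfolding Tf_def by (intro arg_cong2[where f = "(+)"] refl sum.cong) (simp_all add: algebra_simps)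
  then show ?thesis using rep by simp
qed

lemma closed_cube: "closed (cube B :: (real^'d::finite) set)"
  unfolding cube_def by (intro closed_Collect_all closed_Collect_le continuous_intros)



theorem theorem3p1:
  fixes \<rho> :: "real \<Rightarrow> real" and Ns :: "nat list" and B :: real
    and \<mu> :: "(real^'d::finite) measure"
  assumes L2: "Ns \<noteq> []"
    and widths: "\<forall>n\<in>set Ns. 0 < n"
    and cont: "continuous_on UNIV \<rho>" and incr: "mono \<rho>"
    and deriv0: "\<exists>x0 D. (\<rho> has_real_derivative D) (at x0) \<and> D \<noteq> 0"
    and diff_far: "\<exists>r>0. \<forall>x. r < \<bar>x\<bar> \<longrightarrow> \<rho> differentiable (at x)"
    and cond_iv: "(\<exists>lp lm'. 0 \<le> lp \<and> 0 \<le> lm' \<and> lp \<noteq> lm' \<and>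
                       (deriv \<rho> \<longlongrightarrow> lp) at_top \<and> (deriv \<rho> \<longlongrightarrow> lm') at_bot \<and> 2 \<le> last Ns)
                  \<or> bounded (range \<rho>)"
    and Bpos: "B > 0"
    and fin: "finite_measure \<mu>" and borel: "sets \<mu> = sets borel"
    and on_cube: "emeasure \<mu> (UNIV - cube B) = 0"
    and supp: "uncountable (measure_support \<mu>)"
  shows "\<exists>f. f \<in> borel_measurable \<mu> \<and> (\<exists>C. AE x in \<mu>. \<bar>f x\<bar> \<le> C) \<and>
           (\<forall>p::real. 0 < p \<longrightarrow>
              (\<forall>\<epsilon>::real. \<epsilon> > 0 \<longrightarrow> (\<exists>g\<in>RNN \<rho> Ns.
                  (\<integral>\<^sup>+ x. ennreal (\<bar>f x - g x\<bar> powr p) \<partial>\<mu>) < ennreal \<epsilon>))) \<and>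
           \<not> (\<exists>g\<in>RNN \<rho> Ns. AE x in \<mu>. f x = g x)"
proof -
  obtain x0 D where der: "(\<rho> has_real_derivative D) (at x0)" and D: "D \<noteq> 0" using deriv0 by blast
  obtain \<phi> a b K c0 c e where c\<phi>: "continuous_on UNIV \<phi>" and top: "(\<phi> \<longlongrightarrow> b) at_top"
    and bot: "(\<phi> \<longlongrightarrow> a) at_bot" and ab: "a \<noteq> b" and K: "K \<le> last Ns"
    and rep: "\<forall>z. \<phi> z = c0 + (\<Sum>k<K. c k * \<rho> (z + e k))"
    using phi_exists[OF L2 widths cont incr der D diff_far cond_iv] by blast
  obtain M where M: "\<And>z. \<bar>\<phi> z\<bar> \<le> M" using limits_bounded[OF c\<phi> top bot] by blast
  define S where "S = measure_support \<mu>"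
  obtain xs j where xs: "xs \<in> S" and good: "\<And>\<delta>. \<delta> > 0 \<Longrightarrow>
      (\<exists>y\<in>S. dist y xs < \<delta> \<and> y $ j < xs $ j) \<and> (\<exists>y\<in>S. dist y xs < \<delta> \<and> y $ j > xs $ j)"
    using good_point[of S] supp unfolding S_def by blast
  define t where "t = xs $ j"
  define f where "f = (\<lambda>x::real^'d. if t < x $ j then b else if x $ j < t then a else \<phi> 0)"
  have "\<exists>g\<in>(RNN \<rho> Ns :: (real^'d \<Rightarrow> real) set). \<forall>x::real^'d. \<bar>x $ j\<bar> \<le> B \<longrightarrow>
      \<bar>g x - Tf \<rho> K c0 c (\<lambda>_. real n) (\<lambda>k. e k - real n * t) (x $ j)\<bar> \<le> inverse (real (Suc n))" for n
    by (rule net_approx[OF cont der D incr L2 widths K]) (use Bpos in auto)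
  then obtain G where G: "\<And>n. G n \<in> RNN \<rho> Ns"
    and Gapp: "\<And>n x. \<bar>x $ j\<bar> \<le> B \<Longrightarrow> \<bar>G n x - \<phi> (real n * (x $ j - t))\<bar> \<le> inverse (real (Suc n))"
    unfolding Tf_shift[OF rep] by metis
  have Gcont: "continuous_on UNIV (G n)" for n
    using G[of n] realization_cont[OF cont] unfolding RNN_def by auto
  have meas_borel: "measurable \<mu> borel = measurable borel borel" by (rule measurable_cong_sets[OF borel refl])
  have Gm[measurable]: "G n \<in> borel_measurable \<mu>" for n
    unfolding meas_borel by (rule borel_measurable_continuous_onI[OF Gcont])
  have fm_b: "f \<in> borel_measurable borel" unfolding f_def by measurable
  have fm[measurable]: "f \<in> borel_measurable \<mu>" unfolding meas_borel by (rule fm_b)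
  have fb: "\<bar>f x\<bar> \<le> \<bar>a\<bar> + \<bar>b\<bar> + M" for x
    using M[of 0] by (auto simp: f_def)
  have conv: "(\<lambda>n. G n x) \<longlonglongrightarrow> f x" if x: "\<bar>x $ j\<bar> \<le> B" for x
  proof -
    have lim\<phi>: "(\<lambda>n. \<phi> (real n * (x $ j - t))) \<longlonglongrightarrow> f x"
    proof (cases "t < x $ j")
      case True
      have "filterlim (\<lambda>n. (x $ j - t) * real n) at_top sequentially"
        by (rule filterlim_tendsto_pos_mult_at_top[OF tendsto_const]) (use True filterlim_real_sequentially in auto)
      then have "filterlim (\<lambda>n. real n * (x $ j - t)) at_top sequentially" by (simp add: mult.commute)
      from filterlim_compose[OF top this] show ?thesis using True by (simp add: f_def)
    next
      case False
      show ?thesis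
      proof (cases "x $ j < t")
        case True
        have "filterlim (\<lambda>n. (x $ j - t) * real n) at_bot sequentially"
          by (rule filterlim_tendsto_neg_mult_at_bot[OF tendsto_const]) (use True filterlim_real_sequentially in auto)
        then have "filterlim (\<lambda>n. real n * (x $ j - t)) at_bot sequentially" by (simp add: mult.commute)
        from filterlim_compose[OF bot this] show ?thesis using True by (simp add: f_def)
      next
        case False2: False
        then have "x $ j = t" using False by simp
        then show ?thesis using False by (simp add: f_def)
      qed
    qed
    have "(\<lambda>n. G n x - \<phi> (real n * (x $ j - t))) \<longlonglongrightarrow> 0"
      by (rule Lim_null_comparison[OF _ LIMSEQ_inverse_real_of_nat]) (use Gapp[OF x] in auto)
    from tendsto_add[OF lim\<phi> this] show ?thesis by simp
  qed
  have "open (UNIV - (cube B :: (real^'d) set))" using closed_cube[of B] by (rule open_Diff[OF open_UNIV])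
  then have cube_sets: "UNIV - cube B \<in> sets \<mu>" using borel by (simp add: borel_open)
  have AEcube: "AE x in \<mu>. x \<in> cube B"
    by (rule AE_I'[of "UNIV - cube B"]) (use cube_sets on_cube in auto)
  have cube_j: "x \<in> cube B \<Longrightarrow> \<bar>x $ j\<bar> \<le> B" for x by (simp add: cube_def)
  have approx: "\<exists>g\<in>RNN \<rho> Ns. (\<integral>\<^sup>+ x. ennreal (\<bar>f x - g x\<bar> powr p) \<partial>\<mu>) < ennreal \<epsilon>"
    if p: "0 < p" and eps: "\<epsilon> > 0" for p \<epsilon> :: real
  proof -
    define W where "W = \<bar>a\<bar> + \<bar>b\<bar> + M + M + 1"
    have bound: "AE x in \<mu>. norm (\<bar>f x - G n x\<bar> powr p) \<le> W powr p" for n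
      using AEcube
    proof eventually_elim
      case (elim x)
      have "\<bar>G n x - \<phi> (real n * (x $ j - t))\<bar> \<le> 1"
        using Gapp[OF cube_j[OF elim], of n] by (rule order_trans) (simp add: field_simps)
      then have "\<bar>f x - G n x\<bar> \<le> W"
        using fb[of x] M[of "real n * (x $ j - t)"] unfolding W_def by linarith
      then show ?case using p by (simp add: powr_mono2)
    qed
    have lim: "AE x in \<mu>. (\<lambda>n. \<bar>f x - G n x\<bar> powr p) \<longlonglongrightarrow> 0 "
      using AEcube
    proof eventually_elim
      case (elim x)
      have "(\<lambda>n. \<bar>f x - G n x\<bar>) \<longlonglongrightarrow> 0"
        using tendsto_rabs[OF tendsto_diff[OF tendsto_const[of "f x"] conv[OF cube_j[OF elim]]]] by simp
      then show ?case
        by (rule tendsto_zero_powrI[OF _ tendsto_const]) (use p in auto)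
    qed
    have wfin: "(\<integral>\<^sup>+x. ennreal (W powr p) \<partial>\<mu>) < \<infinity>"
      using finite_measure.emeasure_finite[OF fin, of "space \<mu>"]
      by (simp add: nn_integral_const ennreal_mult_less_top top.not_eq_extremum)
    have "(\<lambda>n. \<integral>\<^sup>+x. norm ((\<lambda>x. 0::real) x - \<bar>f x - G n x\<bar> powr p) \<partial>\<mu>) \<longlonglongrightarrow> 0"
      by (rule nn_integral_dominated_convergence_norm[OF _ _ _ bound wfin lim]) measurable
    then have "(\<lambda>n. \<integral>\<^sup>+x. ennreal (\<bar>f x - G n x\<bar> powr p) \<partial>\<mu>) \<longlonglongrightarrow> 0" by simp
    moreover have "(0::ennreal) < ennreal \<epsilon>" using eps by simp
    ultimately have "eventually (\<lambda>n. (\<integral>\<^sup>+x. ennreal (\<bar>f x - G n x\<bar> powr p) \<partial>\<mu>) < ennreal \<epsilon>) sequentially"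
      by (rule order_tendstoD(2))
    then obtain n where "(\<integral>\<^sup>+x. ennreal (\<bar>f x - G n x\<bar> powr p) \<partial>\<mu>) < ennreal \<epsilon>"
      by (auto simp: eventually_sequentially)
    then show ?thesis using G[of n] by blast
  qed
  have notR: "\<not> (\<exists>g\<in>RNN \<rho> Ns. AE x in \<mu>. f x = g x)"
  proof
    assume "\<exists>g\<in>RNN \<rho> Ns. AE x in \<mu>. f x = g x"
    then obtain g where g: "g \<in> RNN \<rho> Ns" and ae: "AE x in \<mu>. f x = g x" by blast
    have "continuous_on UNIV g" using g realization_cont[OF cont] unfolding RNN_def by auto
    then have gc: "isCont g xs" by (simp add: continuous_on_eq_continuous_at)
    have supp_pos: "\<forall>r>0. emeasure \<mu> (ball y r) > 0" if "y \<in> S" for y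
      using that unfolding S_def measure_support_def by auto
    have "g xs = b"
    proof (rule cont_AE_value[OF gc borel ae])
      fix \<delta> :: real assume "\<delta> > 0"
      then obtain y where y: "y \<in> S" "dist y xs < \<delta>" "y $ j > t" using good unfolding t_def by blast
      have "\<forall>w\<in>ball y (y $ j - t). f w = b"
      proof
        fix w assume "w \<in> ball y (y $ j - t)"
        then have "dist (y $ j) (w $ j) < y $ j - t" using dist_vec_nth_le[of y j w] by simp
        then have "t < w $ j" by (simp add: dist_real_def)
        then show "f w = b" by (simp add: f_def)
      qed
      then show "\<exists>y r0. dist y xs < \<delta> \<and> (\<forall>r>0. emeasure \<mu> (ball y r) > 0) \<and> r0 > 0 \<and> (\<forall>w\<in>ball y r0. f w = b)"
        using y supp_pos[OF y(1)] by (intro exI[of _ y] exI[of _ "y $ j - t"]) auto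
    qed
    moreover have "g xs = a"
    proof (rule cont_AE_value[OF gc borel ae])
      fix \<delta> :: real assume "\<delta> > 0"
      then obtain y where y: "y \<in> S" "dist y xs < \<delta>" "y $ j < t" using good unfolding t_def by blast
      have "\<forall>w\<in>ball y (t - y $ j). f w = a"
      proof
        fix w assume "w \<in> ball y (t - y $ j)"
        then have "dist (y $ j) (w $ j) < t - y $ j" using dist_vec_nth_le[of y j w] by simp
        then have "w $ j < t" by (simp add: dist_real_def)
        then show "f w = a" by (simp add: f_def)
      qed
      then show "\<exists>y r0. dist y xs < \<delta> \<and> (\<forall>r>0. emeasure \<mu> (ball y r) > 0) \<and> r0 > 0 \<and> (\<forall>w\<in>ball y r0. f w = a)"
        using y supp_pos[OF y(1)] by (intro exI[of _ y] exI[of _ "t - y $ j"]) auto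
    qed
    ultimately show False using ab by simp
  qed
  have fAE: "\<exists>C. AE x in \<mu>. \<bar>f x\<bar> \<le> C" using fb by blast
  show ?thesis using fm fAE approx notR by blast
qed

end
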